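(* Let $\mu>0$ and $f\in C^2([0,1])$. Then for every $x\in[0,1]$, $$\lim_{n\to+\infty} n\left[\mathscr{L}_n^K(f,x)-f(x)\right]=\ln_\mu(x)\left[f_\mu'(x)\left(\frac12+\frac{x-x^2}{2(1+\mu)}-x\right)+f_\mu''(x)\,\frac{x-x^2}{2}\right].$$
   Context: Fix $\mu>0$. Let $\ln_\mu(x):=\ln(1+\mu+x)$ for $x\in[0,1]$, and for $f:[0,1]\to\mathbb{R}$ let $f_\mu(x):=f(x)/\ln_\mu(x)$. Let $p_{n,k}(y):=\binom{n}{k}y^k(1-y)^{n-k}$ and $a_{n+1}(x):=\dfrac{\ln\left(1+\frac{x}{(n+1)(1+\mu)}\right)}{\ln\left(1+\frac{1}{(n+1)(1+\mu)}\right)}$, $x\in[0,1]$. For $n\in\mathbb{N}$ define $\mathscr{L}_n^K(f,x)=\mathscr{L}_n^K f(x):=\ln_\mu(x)\sum_{k=0}^n p_{n,k}(a_{n+1}(x))\,(n+1)\int_{k/(n+1)}^{(k+1)/(n+1)} f_\mu(t)\,dt$, $x\in[0,1]$. *)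

theory Defs
  imports "HOL-Analysis.Analysis"
begin

definition ln_mu :: "real \<Rightarrow> real \<Rightarrow> real" where
  "ln_mu \<mu> x = ln (1 + \<mu> + x)"

definition f_mu :: "real \<Rightarrow> (real \<Rightarrow> real) \<Rightarrow> real \<Rightarrow> real" where
  "f_mu \<mu> f x = f x / ln_mu \<mu> x"

definition p_nk :: "nat \<Rightarrow> nat \<Rightarrow> real \<Rightarrow> real" where
  "p_nk n k y = real (n choose k) * y ^ k * (1 - y) ^ (n - k)"

text \<open>a_{n+1}(x); the argument n is the index n (so n+1 appears inside).\<close>
definition a_succ :: "real \<Rightarrow> nat \<Rightarrow> real \<Rightarrow> real" where
  "a_succ \<mu> n x = ln (1 + x / ((real n + 1) * (1 + \<mu>))) / ln (1 + 1 / ((real n + 1) * (1 + \<mu>)))"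

definition LK :: "real \<Rightarrow> nat \<Rightarrow> (real \<Rightarrow> real) \<Rightarrow> real \<Rightarrow> real" where
  "LK \<mu> n f x = ln_mu \<mu> x * (\<Sum>k=0..n. p_nk n k (a_succ \<mu> n x) *
      ((real n + 1) * integral {real k / (real n + 1) .. (real k + 1) / (real n + 1)} (f_mu \<mu> f)))"

end

theory Submission
  imports Defs "HOL-Probability.Hoeffding" "HOL-Real_Asymp.Real_Asymp" begin

lemma p_nk_Bernstein: "p_nk n k y = Bernstein n k y"
  by (simp add: p_nk_def Bernstein_def)

lemma sum_p0: "(\<Sum>k=0..n. p_nk n k y) = 1"
  using sum_Bernstein[of n y] by (simp add: p_nk_Bernstein atLeast0AtMost)

lemma sum_p1: "(\<Sum>k=0..n. real k * p_nk n k y) = real n * y"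
  using sum_k_Bernstein[of n y] by (simp add: p_nk_Bernstein atLeast0AtMost)

lemma sum_p2: "(\<Sum>k=0..n. real k * (real k - 1) * p_nk n k y) = real n * (real n - 1) * y^2"
  using sum_kk_Bernstein[of n y] by (simp add: p_nk_Bernstein atLeast0AtMost)

lemma p_nonneg: "y \<in> {0..1} \<Longrightarrow> 0 \<le> p_nk n k y"
  by (simp add: p_nk_Bernstein Bernstein_nonneg)

lemma int_pow:
  fixes a b x :: real
  assumes "a \<le> b"
  shows "integral {a..b} (\<lambda>t. (t - x)^j) = ((b - x)^(Suc j) - (a - x)^(Suc j)) / real (Suc j)"
proof -
  have "((\<lambda>t. (t - x)^j) has_integral ((\<lambda>t. (t - x)^(Suc j) / real (Suc j)) b - (\<lambda>t. (t - x)^(Suc j) / real (Suc j)) a)) {a..b}"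
  proof (rule fundamental_theorem_of_calculus[OF assms])
    fix t assume "t \<in> {a..b}"
    have "((\<lambda>t. (t - x)^(Suc j) / real (Suc j)) has_real_derivative (t - x)^j) (at t within {a..b})"
      by (rule derivative_eq_intros refl | simp)+
    then show "((\<lambda>t. (t - x)^(Suc j) / real (Suc j)) has_vector_derivative (t - x)^j) (at t within {a..b})"
      by (simp add: has_real_derivative_iff_has_vector_derivative)
  qed
  then show ?thesis by (simp add: integral_unique diff_divide_distrib)
qed

lemma a_succ_range:
  assumes "\<mu> > 0" "x \<in> {0..1}"
  shows "a_succ \<mu> n x \<in> {0..1}"
proof -
  define m where "m = (real n + 1) * (1 + \<mu>)"
  have m: "m > 0" using assms by (simp add: m_def)
  have "0 \<le> ln (1 + x / m)" using assms m by simp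
  moreover have "ln (1 + x / m) \<le> ln (1 + 1 / m)"
  proof -
    have "x / m \<le> 1 / m" using assms m by (simp add: divide_right_mono)
    moreover have "0 \<le> x / m" using assms m by simp
    ultimately show ?thesis by simp
  qed
  moreover have "0 < ln (1 + 1/m)" using m by (intro ln_gt_zero) simp
  ultimately show ?thesis unfolding a_succ_def m_def[symmetric]
    by (simp add: divide_le_eq_1)
qed

lemma asy: "0 < x \<Longrightarrow> x < (1::real) \<Longrightarrow> 0 < m \<Longrightarrow> ((\<lambda>n. real n * (ln (1 + x/((real n+1)*m)) / ln (1+1/((real n+1)*m)) - x)) \<longlongrightarrow> x*(1-x)/(2*m)) at_top"
  by (real_asymp simp: field_simps)

lemma a_succ_lim:
  assumes "\<mu> > 0" "x \<in> {0..1}"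
  shows "(\<lambda>n. real n * (a_succ \<mu> n x - x)) \<longlonglongrightarrow> x * (1 - x) / (2 * (1 + \<mu>))"
proof -
  consider "x = 0" | "x = 1" | "0 < x" "x < 1" using assms by force
  then show ?thesis
  proof cases
    case 1 then show ?thesis by (simp add: a_succ_def)
  next
    case 2
    have "a_succ \<mu> n 1 = 1" for n
    proof -
      have "0 < 1 / ((real n + 1) * (1 + \<mu>))" using assms by (simp add: add_pos_pos)
      then have "0 < ln (1 + 1 / ((real n + 1) * (1 + \<mu>)))" by (intro ln_gt_zero) simp
      then show ?thesis by (simp add: a_succ_def)
    qed
    then show ?thesis using 2 by simp
  next
    case 3
    have m: "0 < 1 + \<mu>" using assms by simp
    show ?thesis unfolding a_succ_def using asy[OF 3 m] .
  qed
qed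

definition KK :: "nat \<Rightarrow> (real \<Rightarrow> real) \<Rightarrow> real \<Rightarrow> real" where
  "KK n h y = (\<Sum>k=0..n. p_nk n k y *
      ((real n + 1) * integral {real k / (real n + 1) .. (real k + 1) / (real n + 1)} h))"

lemma LK_KK: "LK \<mu> n f x = ln_mu \<mu> x * KK n (f_mu \<mu> f) (a_succ \<mu> n x)"
  by (simp add: LK_def KK_def)

lemma sum_lin:
  "(\<Sum>k=0..n. p_nk n k y * (real k * (real k - 1) * A + real k * B + C)) =
     real n * (real n - 1) * y^2 * A + real n * y * B + C"
proof -
  have "(\<Sum>k=0..n. p_nk n k y * (real k * (real k - 1) * A + real k * B + C)) =
     (\<Sum>k=0..n. (real k * (real k - 1) * p_nk n k y) * A + (real k * p_nk n k y) * B + p_nk n k y * C)"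
    by (intro sum.cong) (simp_all add: algebra_simps)
  also have "\<dots> = (\<Sum>k=0..n. (real k * (real k - 1) * p_nk n k y) * A) + (\<Sum>k=0..n. (real k * p_nk n k y) * B)
     + (\<Sum>k=0..n. p_nk n k y * C)"
    by (simp only: sum.distrib)
  also have "\<dots> = real n * (real n - 1) * y^2 * A + real n * y * B + C"
    by (simp only: sum_distrib_right[symmetric] sum_distrib_left[symmetric] sum_p0 sum_p1 sum_p2)
  finally show ?thesis .
qed

lemma int_k:
  fixes x :: real
  shows "(real n + 1) * integral {real k / (real n + 1) .. (real k + 1) / (real n + 1)} (\<lambda>t. (t - x)^j)
     = (real n + 1) * (((real k + 1) / (real n + 1) - x)^(Suc j) - (real k / (real n + 1) - x)^(Suc j)) / real (Suc j)"
  by (subst int_pow) (auto simp: divide_right_mono)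

lemma sq_id:
  fixes N k x :: real
  assumes "N > 0"
  shows "N * (((k + 1) / N - x)^2 - (k / N - x)^2) / 2 = k * (k - 1) * 0 + k * (1 / N) + (1 / (2 * N) - x)"
  using assms by (simp add: field_simps power2_eq_square)

lemma cube_id:
  fixes N k x :: real
  assumes "N > 0"
  shows "N * (((k + 1) / N - x)^3 - (k / N - x)^3) / 3 = k * (k - 1) * (1 / N^2) + k * (2 / N^2 - 2 * x / N)
       + (x^2 - x / N + 1 / (3 * N^2))"
  using assms by (simp add: field_simps power2_eq_square power3_eq_cube)

lemma KK0: "KK n (\<lambda>t. c) y = c"
proof -
  have "(real n + 1) * integral {real k / (real n + 1) .. (real k + 1) / (real n + 1)} (\<lambda>t. c) =
     real k * (real k - 1) * 0 + real k * 0 + c" for k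
  proof -
    have le: "real k / (real n + 1) \<le> (real k + 1) / (real n + 1)" by (simp add: divide_right_mono)
    have "integral {real k / (real n + 1) .. (real k + 1) / (real n + 1)} (\<lambda>t. c) =
       ((real k + 1) / (real n + 1) - real k / (real n + 1)) * c" using le by simp
    also have "(real n + 1) * \<dots> = c" by (simp add: field_simps)
    finally show ?thesis by simp
  qed
  note pk = this
  show ?thesis by (simp only: KK_def pk sum_lin)
qed

lemma KK1: "KK n (\<lambda>t. t - x) y = real n * y / (real n + 1) + 1 / (2 * (real n + 1)) - x"
proof -
  have "(real n + 1) * integral {real k / (real n + 1) .. (real k + 1) / (real n + 1)} (\<lambda>t. t - x)
     = real k * (real k - 1) * 0 + real k * (1 / (real n + 1)) + (1 / (2 * (real n + 1)) - x)" for k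
  proof -
    have "(real n + 1) * integral {real k / (real n + 1) .. (real k + 1) / (real n + 1)} (\<lambda>t. t - x)
       = (real n + 1) * (((real k + 1) / (real n + 1) - x)^2 - (real k / (real n + 1) - x)^2) / 2"
      using int_k[of n k x 1] by (simp add: power2_eq_square)
    also have "\<dots> = real k * (real k - 1) * 0 + real k * (1 / (real n + 1)) + (1 / (2 * (real n + 1)) - x)"
      by (rule sq_id) simp
    finally show ?thesis .
  qed
  note pk = this
  have "KK n (\<lambda>t. t - x) y = real n * (real n - 1) * y^2 * 0 + real n * y * (1 / (real n + 1)) + (1 / (2 * (real n + 1)) - x)"
    by (simp only: KK_def pk sum_lin)
  then show ?thesis by simp
qed

lemma KK2: "KK n (\<lambda>t. (t - x)^2) y = real n * (real n - 1) * y^2 * (1 / (real n + 1)^2)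
   + real n * y * (2 / (real n + 1)^2 - 2 * x / (real n + 1)) + (x^2 - x / (real n + 1) + 1 / (3 * (real n + 1)^2))"
proof -
  have "(real n + 1) * integral {real k / (real n + 1) .. (real k + 1) / (real n + 1)} (\<lambda>t. (t - x)^2)
     = real k * (real k - 1) * (1 / (real n + 1)^2) + real k * (2 / (real n + 1)^2 - 2 * x / (real n + 1))
       + (x^2 - x / (real n + 1) + 1 / (3 * (real n + 1)^2))" for k
  proof -
    have "(real n + 1) * integral {real k / (real n + 1) .. (real k + 1) / (real n + 1)} (\<lambda>t. (t - x)^2)
       = (real n + 1) * (((real k + 1) / (real n + 1) - x)^3 - (real k / (real n + 1) - x)^3) / 3"
      using int_k[of n k x 2] by simp
    also have "\<dots> = real k * (real k - 1) * (1 / (real n + 1)^2) + real k * (2 / (real n + 1)^2 - 2 * x / (real n + 1))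
       + (x^2 - x / (real n + 1) + 1 / (3 * (real n + 1)^2))"
      by (rule cube_id) simp
    finally show ?thesis .
  qed
  note pk = this
  show ?thesis by (simp only: KK_def pk sum_lin)
qed

lemma id1:
  fixes n N y x :: real
  assumes "N > 0" "n = N - 1"
  shows "n * (n * y / N + 1 / (2 * N) - x) = (n / N) * (n * (y - x) + 1/2 - x)"
  unfolding assms(2) using assms(1) by (simp add: field_simps)

lemma id2:
  fixes n N y x :: real
  assumes "N > 0" "n = N - 1"
  shows "n * (n * (n - 1) * y^2 * (1 / N^2) + n * y * (2 / N^2 - 2 * x / N) + (x^2 - x / N + 1 / (3 * N^2)))
    = (n / N^2) * ((n * (y - x) - x)^2 + (n * (y - x) - x) + 1/3) + (n / N)^2 * (y * (1 - y))"
  unfolding assms(2) using assms(1) by (simp add: field_simps power2_eq_square)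

lemma lim_aux1: "(\<lambda>n. real n / (real n + 1)) \<longlonglongrightarrow> 1"
  by real_asymp

lemma lim_aux2: "(\<lambda>n. real n / (real n + 1)^2) \<longlonglongrightarrow> 0"
  by real_asymp

lemma lim1:
  assumes "(\<lambda>n. real n * (y n - x)) \<longlonglongrightarrow> c"
  shows "(\<lambda>n. real n * KK n (\<lambda>t. t - x) (y n)) \<longlonglongrightarrow> c + 1/2 - x"
proof -
  have "(\<lambda>n. (real n / (real n + 1)) * (real n * (y n - x) + 1/2 - x)) \<longlonglongrightarrow> 1 * (c + 1/2 - x)"
    by (intro tendsto_intros lim_aux1 assms)
  moreover have "real n * KK n (\<lambda>t. t - x) (y n) = (real n / (real n + 1)) * (real n * (y n - x) + 1/2 - x)" for n
    unfolding KK1 by (rule id1) simp_all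
  ultimately show ?thesis by simp
qed

lemma y_lim:
  assumes "(\<lambda>n. real n * (y n - x)) \<longlonglongrightarrow> c"
  shows "y \<longlonglongrightarrow> x"
proof -
  have "(\<lambda>n. (1 / real n) * (real n * (y n - x))) \<longlonglongrightarrow> 0"
    using tendsto_mult[OF lim_1_over_n assms] by simp
  then have "(\<lambda>n. y n - x) \<longlonglongrightarrow> 0"
  proof (rule Lim_transform_eventually)
    show "\<forall>\<^sub>F n in sequentially. 1 / real n * (real n * (y n - x)) = y n - x"
      using eventually_gt_at_top[of 0] by eventually_elim simp
  qed
  then show ?thesis by (simp add: LIM_zero_iff)
qed

lemma lim2:
  assumes "(\<lambda>n. real n * (y n - x)) \<longlonglongrightarrow> c"
  shows "(\<lambda>n. real n * KK n (\<lambda>t. (t - x)^2) (y n)) \<longlonglongrightarrow> x * (1 - x)"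
proof -
  have yl: "y \<longlonglongrightarrow> x" by (rule y_lim[OF assms])
  have "(\<lambda>n. (real n / (real n + 1)^2) * ((real n * (y n - x) - x)^2 + (real n * (y n - x) - x) + 1/3)
     + (real n / (real n + 1))^2 * (y n * (1 - y n))) \<longlonglongrightarrow> 0 * ((c - x)^2 + (c - x) + 1/3) + 1^2 * (x * (1 - x))"
    by (intro tendsto_intros lim_aux1 lim_aux2 assms yl)
  moreover have "real n * KK n (\<lambda>t. (t - x)^2) (y n) = (real n / (real n + 1)^2) * ((real n * (y n - x) - x)^2 + (real n * (y n - x) - x) + 1/3)
     + (real n / (real n + 1))^2 * (y n * (1 - y n))" for n
    unfolding KK2 by (rule id2) simp_all
  ultimately show ?thesis by simp
qed

lemma tail:
  assumes y: "y \<in> {0..1}" and n: "n > 0" and eta: "\<eta> \<ge> 0"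
  shows "(\<Sum>k=0..n. p_nk n k y * (if \<eta> \<le> \<bar>real k / real n - y\<bar> then 1 else 0)) \<le> 2 * exp (-2 * real n * \<eta>^2)"
proof -
  let ?A = "{k\<in>{0..n}. \<eta> \<le> \<bar>real k / real n - y\<bar>}"
  have "(\<Sum>k=0..n. p_nk n k y * (if \<eta> \<le> \<bar>real k / real n - y\<bar> then 1 else 0)) = (\<Sum>k\<in>?A. p_nk n k y)"
    by (subst sum.inter_filter) (auto intro: sum.cong)
  also have "\<dots> = (\<Sum>k\<in>?A. pmf (binomial_pmf n y) k)"
    using y by (intro sum.cong) (auto simp: p_nk_def)
  also have "\<dots> = measure_pmf.prob (binomial_pmf n y) ?A"
    by (rule measure_measure_pmf_finite[symmetric]) simp
  also have "\<dots> \<le> measure_pmf.prob (binomial_pmf n y) {k. \<eta> \<le> \<bar>real k / real n - y\<bar>}"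
    by (intro measure_pmf.finite_measure_mono) auto
  also have "\<dots> \<le> 2 * exp (real_of_int (- 2 * int n) * \<eta>\<^sup>2)"
    by (rule binomial_distribution.prob_abs_ge'[OF _ n eta]) (unfold_locales, rule y)
  also have "\<dots> = 2 * exp (-2 * real n * \<eta>^2)" by simp
  finally show ?thesis .
qed

lemma exp_lim: "a > 0 \<Longrightarrow> (\<lambda>n. real n * (2 * exp (- 2 * real n * a))) \<longlonglongrightarrow> 0"
  by real_asymp

lemma Ik_sub:
  assumes "k \<le> n"
  shows "{real k / (real n + 1) .. (real k + 1) / (real n + 1)} \<subseteq> {0..1}"
proof -
  have "(real k + 1) / (real n + 1) \<le> 1" using assms by (simp add: divide_le_eq_1)
  then show ?thesis by (auto intro: order_trans)
qed

lemma KK_rem_bound: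
  fixes R :: "real \<Rightarrow> real"
  assumes contR: "continuous_on {0..1} R"
    and M: "\<And>t. t \<in> {0..1} \<Longrightarrow> \<bar>R t\<bar> \<le> M"
    and eps: "\<epsilon> \<ge> 0"
    and loc: "\<And>t. t \<in> {0..1} \<Longrightarrow> \<bar>t - x\<bar> < \<delta> \<Longrightarrow> \<bar>R t\<bar> \<le> \<epsilon> * (t - x)^2"
    and y: "y \<in> {0..1}" and n: "n > 0"
    and yx: "\<bar>y - x\<bar> < \<delta> / 4" and nd: "1 / (real n + 1) < \<delta> / 4"
  shows "\<bar>KK n R y\<bar> \<le> \<epsilon> * KK n (\<lambda>t. (t - x)^2) y +
     M * (\<Sum>k=0..n. p_nk n k y * (if \<delta> / 4 \<le> \<bar>real k / real n - y\<bar> then 1 else 0))"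
proof -
  define N where "N = real n + 1"
  have N: "N > 0" by (simp add: N_def)
  have M0: "M \<ge> 0" using M[of 0] by simp
  have pk: "\<bar>N * integral {real k / N .. (real k + 1) / N} R\<bar> \<le>
      \<epsilon> * (N * integral {real k / N .. (real k + 1) / N} (\<lambda>t. (t - x)^2)) +
      M * (if \<delta> / 4 \<le> \<bar>real k / real n - y\<bar> then 1 else 0)" if k: "k \<in> {0..n}" for k
  proof -
    let ?I = "{real k / N .. (real k + 1) / N}"
    have sub: "?I \<subseteq> {0..1}" using Ik_sub[of k n] k by (simp add: N_def)
    have le: "real k / N \<le> (real k + 1) / N" using N by (simp add: divide_right_mono)
    have intR: "R integrable_on ?I"
      by (rule integrable_continuous_interval) (rule continuous_on_subset[OF contR sub])
    have intq: "(\<lambda>t. (t - x)^2) integrable_on ?I"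
      by (rule integrable_continuous_interval) (intro continuous_intros)
    have q0: "0 \<le> integral ?I (\<lambda>t. (t - x)^2)"
      by (rule integral_nonneg[OF intq]) simp
    show ?thesis
    proof (cases "\<delta> / 4 \<le> \<bar>real k / real n - y\<bar>")
      case True
      have "\<bar>integral ?I R\<bar> \<le> integral ?I (\<lambda>t. M)"
        using Henstock_Kurzweil_Integration.integral_norm_bound_integral[OF intR integrable_const_ivl[of M]] M sub
        by auto
      also have "\<dots> = ((real k + 1) / N - real k / N) * M" using le by simp
      also have "\<dots> = M / N" by (simp add: diff_divide_distrib[symmetric])
      finally have "\<bar>N * integral ?I R\<bar> \<le> M" using N by (simp add: abs_mult field_simps)
      moreover have "0 \<le> \<epsilon> * (N * integral ?I (\<lambda>t. (t - x)^2))" using eps N q0 by simp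
      ultimately show ?thesis using True by simp
    next
      case False
      have "\<bar>R t\<bar> \<le> \<epsilon> * (t - x)^2" if t: "t \<in> ?I" for t
      proof (rule loc)
        show "t \<in> {0..1}" using t sub by auto
        have "(real k + 1) / N = real k / N + 1 / N" by (simp add: add_divide_distrib)
        then have "\<bar>t - real k / N\<bar> \<le> 1 / N" using t by auto
        moreover have "\<bar>real k / N - real k / real n\<bar> \<le> 1 / N"
        proof -
          have "\<bar>real k / N - real k / real n\<bar> = real k / (real n * N)"
            using n N k by (simp add: N_def field_simps)
          also have "\<dots> \<le> 1 / N" using n N k by (simp add: field_simps)
          finally show ?thesis .
        qed
        moreover have "1 / N < \<delta> / 4" using nd by (simp add: N_def)
        ultimately show "\<bar>t - x\<bar> < \<delta>" using False yx by linarith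
      qed
      then have "\<bar>integral ?I R\<bar> \<le> integral ?I (\<lambda>t. \<epsilon> * (t - x)^2)"
        using Henstock_Kurzweil_Integration.integral_norm_bound_integral[OF intR integrable_cmul[OF intq, of \<epsilon>]]
        by auto
      also have "\<dots> = \<epsilon> * integral ?I (\<lambda>t. (t - x)^2)" by simp
      finally have "\<bar>N * integral ?I R\<bar> \<le> \<epsilon> * (N * integral ?I (\<lambda>t. (t - x)^2))"
        using N by (simp add: abs_mult mult.left_commute)
      then show ?thesis using False by simp
    qed
  qed
  have "\<bar>KK n R y\<bar> \<le> (\<Sum>k=0..n. \<bar>p_nk n k y * (N * integral {real k / N .. (real k + 1) / N} R)\<bar>)"
    unfolding KK_def N_def by (rule sum_abs)
  also have "\<dots> \<le> (\<Sum>k=0..n. p_nk n k y * (\<epsilon> * (N * integral {real k / N .. (real k + 1) / N} (\<lambda>t. (t - x)^2)) +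
      M * (if \<delta> / 4 \<le> \<bar>real k / real n - y\<bar> then 1 else 0)))"
  proof (rule sum_mono)
    fix k assume k: "k \<in> {0..n}"
    have "0 \<le> p_nk n k y" using y by (rule p_nonneg)
    then show "\<bar>p_nk n k y * (N * integral {real k / N .. (real k + 1) / N} R)\<bar> \<le>
        p_nk n k y * (\<epsilon> * (N * integral {real k / N .. (real k + 1) / N} (\<lambda>t. (t - x)^2)) +
      M * (if \<delta> / 4 \<le> \<bar>real k / real n - y\<bar> then 1 else 0))"
      using pk[OF k] by (simp add: abs_mult mult_left_mono)
  qed
  also have "\<dots> = \<epsilon> * KK n (\<lambda>t. (t - x)^2) y +
     M * (\<Sum>k=0..n. p_nk n k y * (if \<delta> / 4 \<le> \<bar>real k / real n - y\<bar> then 1 else 0))"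
    unfolding KK_def N_def by (simp add: sum.distrib sum_distrib_left algebra_simps)
  finally show ?thesis .
qed

lemma lim_aux3: "(\<lambda>n. 1 / (real n + 1)) \<longlonglongrightarrow> 0"
  by real_asymp

lemma rem_lim:
  fixes R :: "real \<Rightarrow> real"
  assumes contR: "continuous_on {0..1} R"
    and small: "\<And>\<epsilon>. \<epsilon> > 0 \<Longrightarrow> \<exists>\<delta>>0. \<forall>t\<in>{0..1}. \<bar>t - x\<bar> < \<delta> \<longrightarrow> \<bar>R t\<bar> \<le> \<epsilon> * (t - x)^2"
    and yr: "\<And>n. y n \<in> {0..1}"
    and yl: "(\<lambda>n. real n * (y n - x)) \<longlonglongrightarrow> c"
    and x: "x \<in> {0..1}"
  shows "(\<lambda>n. real n * KK n R (y n)) \<longlonglongrightarrow> 0"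
proof -
  have "compact (R ` {0..1})" by (intro compact_continuous_image contR) simp
  then obtain M where M: "\<And>t. t \<in> {0..1} \<Longrightarrow> \<bar>R t\<bar> \<le> M"
    using compact_imp_bounded bounded_iff by (metis image_eqI real_norm_def)
  have M0: "M \<ge> 0" using M[of 0] by simp
  show ?thesis unfolding tendsto_iff
  proof (intro allI impI)
    fix e :: real assume e: "e > 0"
    have xx: "x * (1 - x) + 1 > 0"
      using x by (simp add: add_nonneg_pos)
    define \<epsilon> where "\<epsilon> = e / (2 * (x * (1 - x) + 1))"
    have eps: "\<epsilon> > 0" using e xx by (simp add: \<epsilon>_def)
    have eps2: "\<epsilon> * (x * (1 - x) + 1) = e / 2" using xx by (simp add: \<epsilon>_def field_simps)
    obtain \<delta> where d: "\<delta> > 0" and loc: "\<forall>t\<in>{0..1}. \<bar>t - x\<bar> < \<delta> \<longrightarrow> \<bar>R t\<bar> \<le> \<epsilon> * (t - x)^2"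
      using small[OF eps] by blast
    have E1: "eventually (\<lambda>n. real n * KK n (\<lambda>t. (t - x)^2) (y n) < x * (1 - x) + 1) sequentially"
      by (rule order_tendstoD(2)[OF lim2[OF yl]]) simp
    have E2: "eventually (\<lambda>n. real n * (2 * exp (- 2 * real n * (\<delta>/4)^2)) < e / (2 * (M + 1))) sequentially"
      by (rule order_tendstoD(2)[OF exp_lim]) (use d e M0 in simp_all)
    have E3: "eventually (\<lambda>n. dist (y n) x < \<delta> / 4) sequentially"
      using y_lim[OF yl] d unfolding tendsto_iff by (meson zero_less_divide_iff zero_less_numeral)
    have E4: "eventually (\<lambda>n. 1 / (real n + 1) < \<delta> / 4) sequentially"
      by (rule order_tendstoD(2)[OF lim_aux3]) (use d in simp)
    show "eventually (\<lambda>n. dist (real n * KK n R (y n)) 0 < e) sequentially"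
      using E1 E2 E3 E4 eventually_gt_at_top[of 0]
    proof eventually_elim
      case (elim n)
      let ?T = "\<Sum>k=0..n. p_nk n k (y n) * (if \<delta> / 4 \<le> \<bar>real k / real n - y n\<bar> then 1 else 0)"
      have b: "\<bar>KK n R (y n)\<bar> \<le> \<epsilon> * KK n (\<lambda>t. (t - x)^2) (y n) + M * ?T"
        by (rule KK_rem_bound[OF contR M eps[THEN less_imp_le] _ yr]) (use loc elim in \<open>auto simp: dist_real_def\<close>)
      have T: "?T \<le> 2 * exp (-2 * real n * (\<delta>/4)^2)"
        by (rule tail[OF yr]) (use elim d in auto)
      have "\<bar>real n * KK n R (y n)\<bar> = real n * \<bar>KK n R (y n)\<bar>" by (simp add: abs_mult)
      also have "\<dots> \<le> \<epsilon> * (real n * KK n (\<lambda>t. (t - x)^2) (y n)) + M * (real n * ?T)"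
        using mult_left_mono[OF b, of "real n"] by (simp add: algebra_simps)
      also have "\<dots> < e / 2 + e / 2"
      proof (rule add_less_le_mono)
        show "\<epsilon> * (real n * KK n (\<lambda>t. (t - x)^2) (y n)) < e / 2"
          using mult_strict_left_mono[OF elim(1) eps] eps2 by simp
        have "real n * ?T \<le> real n * (2 * exp (- 2 * real n * (\<delta>/4)^2))"
          using T by (simp add: mult_left_mono)
        also have "\<dots> \<le> e / (2 * (M + 1))" using elim(2) by simp
        finally have "M * (real n * ?T) \<le> M * (e / (2 * (M + 1)))" using M0 by (rule mult_left_mono)
        also have "\<dots> \<le> e / 2" using M0 e by (simp add: field_simps)
        finally show "M * (real n * ?T) \<le> e / 2" .
      qed
      finally show ?case by simp
    qed
  qed
qed

lemma taylor_small:
  fixes g g' :: "real \<Rightarrow> real"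
  assumes g1: "\<And>t. t \<in> {0..1} \<Longrightarrow> (g has_real_derivative g' t) (at t within {0..1})"
    and g2: "(g' has_real_derivative D) (at x within {0..1})"
    and x: "x \<in> {0..1}" and eps: "\<epsilon> > 0"
  shows "\<exists>\<delta>>0. \<forall>t\<in>{0..1}. \<bar>t - x\<bar> < \<delta> \<longrightarrow>
           \<bar>g t - g x - g' x * (t - x) - D / 2 * (t - x)^2\<bar> \<le> \<epsilon> * (t - x)^2"
proof -
  have "((\<lambda>s. (g' s - g' x) / (s - x)) \<longlongrightarrow> D) (at x within {0..1})"
    using g2 by (simp add: has_field_derivative_iff)
  then have "eventually (\<lambda>s. dist ((g' s - g' x) / (s - x)) D < \<epsilon>) (at x within {0..1})"
    using eps unfolding tendsto_iff by blast
  then obtain \<delta> where d: "\<delta> > 0" and dd: "\<And>s. s \<in> {0..1} \<Longrightarrow> s \<noteq> x \<Longrightarrow> dist s x < \<delta> \<Longrightarrow>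
      dist ((g' s - g' x) / (s - x)) D < \<epsilon>"
    unfolding eventually_at by blast
  have bd: "\<bar>g' s - g' x - D * (s - x)\<bar> \<le> \<epsilon> * \<bar>s - x\<bar>" if s: "s \<in> {0..1}" "\<bar>s - x\<bar> < \<delta>" for s
  proof (cases "s = x")
    case False
    have "\<bar>(g' s - g' x) / (s - x) - D\<bar> < \<epsilon>" using dd[OF s(1) False] s(2) by (simp add: dist_real_def)
    moreover have "g' s - g' x - D * (s - x) = ((g' s - g' x) / (s - x) - D) * (s - x)"
      using False by (simp add: field_simps)
    ultimately show ?thesis by (simp add: abs_mult mult_right_mono)
  qed simp
  show ?thesis
  proof (intro exI[of _ \<delta>] conjI d ballI impI)
    fix t assume t: "t \<in> {0..1}" and tx: "\<bar>t - x\<bar> < \<delta>"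
    define r where "r = \<bar>t - x\<bar>"
    define S where "S = {0..1} \<inter> cball x r"
    define Rf where "Rf = (\<lambda>s. g s - g x - g' x * (s - x) - D / 2 * (s - x)^2)"
    have SS: "S \<subseteq> {0..1}" by (simp add: S_def)
    have "norm (Rf t - Rf x) \<le> (\<epsilon> * r) * norm (t - x)"
    proof (rule field_differentiable_bound)
      show "convex S" unfolding S_def by (intro convex_Int convex_cball convex_real_interval)
      show "t \<in> S" "x \<in> S" using t x by (auto simp: S_def r_def dist_real_def)
      fix s assume s: "s \<in> S"
      have gs: "(g has_real_derivative g' s) (at s within S)"
        using g1[of s] s SS by (meson has_field_derivative_subset subsetD)
      have d1: "((\<lambda>s. g' x * (s - x)) has_real_derivative g' x) (at s within S)"
        by (auto intro!: derivative_eq_intros)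
      have d2: "((\<lambda>s. D / 2 * (s - x)^2) has_real_derivative D * (s - x)) (at s within S)"
        by (auto intro!: derivative_eq_intros)
      have "(Rf has_field_derivative (g' s - 0 - g' x - D * (s - x))) (at s within S)"
        unfolding Rf_def by (intro DERIV_diff gs DERIV_const d1 d2)
      then show "(Rf has_field_derivative (g' s - g' x - D * (s - x))) (at s within S)"
        by simp
      have sx: "\<bar>s - x\<bar> \<le> r" using s by (auto simp: S_def dist_real_def)
      have "\<bar>g' s - g' x - D * (s - x)\<bar> \<le> \<epsilon> * \<bar>s - x\<bar>"
        using bd[of s] s sx tx SS r_def by auto
      also have "\<dots> \<le> \<epsilon> * r" using sx eps by simp
      finally show "norm (g' s - g' x - D * (s - x)) \<le> \<epsilon> * r" by simp
    qed
    then show "\<bar>g t - g x - g' x * (t - x) - D / 2 * (t - x)^2\<bar> \<le> \<epsilon> * (t - x)^2"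
      by (simp add: Rf_def r_def power2_eq_square abs_mult_self_eq)
  qed
qed

lemma KK_add:
  assumes "continuous_on {0..1} h1" "continuous_on {0..1} h2"
  shows "KK n (\<lambda>t. h1 t + h2 t) y = KK n h1 y + KK n h2 y"
proof -
  have "integral {real k / (real n + 1) .. (real k + 1) / (real n + 1)} (\<lambda>t. h1 t + h2 t) =
     integral {real k / (real n + 1) .. (real k + 1) / (real n + 1)} h1 +
     integral {real k / (real n + 1) .. (real k + 1) / (real n + 1)} h2" if k: "k \<in> {0..n}" for k
  proof (rule integral_add)
    have sub: "{real k / (real n + 1) .. (real k + 1) / (real n + 1)} \<subseteq> {0..1}" using Ik_sub[of k n] k by simp
    show "h1 integrable_on {real k / (real n + 1) .. (real k + 1) / (real n + 1)}"
      by (rule integrable_continuous_interval) (rule continuous_on_subset[OF assms(1) sub])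
    show "h2 integrable_on {real k / (real n + 1) .. (real k + 1) / (real n + 1)}"
      by (rule integrable_continuous_interval) (rule continuous_on_subset[OF assms(2) sub])
  qed
  then show ?thesis unfolding KK_def by (simp add: sum.distrib algebra_simps)
qed

lemma KK_cmul: "KK n (\<lambda>t. c * h t) y = c * KK n h y"
  unfolding KK_def by (simp add: sum_distrib_left algebra_simps)

theorem theorem4p1:
  fixes \<mu> :: real and f f' f'' g' g'' :: "real \<Rightarrow> real" and x :: real
  assumes mu: "\<mu> > 0"
    and f1: "\<And>t. t \<in> {0..1} \<Longrightarrow> (f has_real_derivative f' t) (at t within {0..1})"
    and f2: "\<And>t. t \<in> {0..1} \<Longrightarrow> (f' has_real_derivative f'' t) (at t within {0..1})"
    and f2c: "continuous_on {0..1} f''"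
    and g1: "\<And>t. t \<in> {0..1} \<Longrightarrow> (f_mu \<mu> f has_real_derivative g' t) (at t within {0..1})"
    and g2: "\<And>t. t \<in> {0..1} \<Longrightarrow> (g' has_real_derivative g'' t) (at t within {0..1})"
    and x: "x \<in> {0..1}"
  shows "(\<lambda>n. real n * (LK \<mu> n f x - f x)) \<longlonglongrightarrow>
    ln_mu \<mu> x * (g' x * (1/2 + (x - x^2) / (2 * (1 + \<mu>)) - x) + g'' x * ((x - x^2) / 2))"
proof -
  define g where "g = f_mu \<mu> f"
  define y where "y = (\<lambda>n. a_succ \<mu> n x)"
  define c where "c = x * (1 - x) / (2 * (1 + \<mu>))"
  define R where "R = (\<lambda>t. g t - g x - g' x * (t - x) - g'' x / 2 * (t - x)^2)"
  have lnpos: "ln_mu \<mu> x > 0" using mu x by (simp add: ln_mu_def)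
  have fx: "f x = ln_mu \<mu> x * g x" using lnpos by (simp add: g_def f_mu_def)
  have gc: "continuous_on {0..1} g" unfolding g_def by (rule DERIV_continuous_on) (rule g1)
  have Rc: "continuous_on {0..1} R" unfolding R_def by (intro continuous_intros gc)
  have yr: "\<And>n. y n \<in> {0..1}" unfolding y_def by (rule a_succ_range[OF mu x])
  have yl: "(\<lambda>n. real n * (y n - x)) \<longlonglongrightarrow> c" unfolding y_def c_def by (rule a_succ_lim[OF mu x])
  have small: "\<exists>\<delta>>0. \<forall>t\<in>{0..1}. \<bar>t - x\<bar> < \<delta> \<longrightarrow> \<bar>R t\<bar> \<le> \<epsilon> * (t - x)^2" if "\<epsilon> > 0" for \<epsilon>
    unfolding R_def by (rule taylor_small[OF g1[folded g_def] g2[OF x] x that])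
  have decomp: "KK n g z = g x + g' x * KK n (\<lambda>t. t - x) z + g'' x / 2 * KK n (\<lambda>t. (t - x)^2) z + KK n R z" for n z
  proof -
    have "g = (\<lambda>t. g x + (g' x * (t - x) + (g'' x / 2 * (t - x)^2 + R t)))"
      by (simp add: R_def)
    then have "KK n g z = KK n (\<lambda>t. g x + (g' x * (t - x) + (g'' x / 2 * (t - x)^2 + R t))) z" by simp
    also have "\<dots> = KK n (\<lambda>t. g x) z + (KK n (\<lambda>t. g' x * (t - x)) z + (KK n (\<lambda>t. g'' x / 2 * (t - x)^2) z + KK n R z))"
      by (subst KK_add, (intro continuous_intros Rc)+)+ (rule refl)
    also have "\<dots> = g x + g' x * KK n (\<lambda>t. t - x) z + g'' x / 2 * KK n (\<lambda>t. (t - x)^2) z + KK n R z"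
      by (simp only: KK0 KK_cmul add.assoc)
    finally show ?thesis .
  qed
  have eq: "real n * (LK \<mu> n f x - f x) = ln_mu \<mu> x * (g' x * (real n * KK n (\<lambda>t. t - x) (y n))
     + g'' x / 2 * (real n * KK n (\<lambda>t. (t - x)^2) (y n)) + real n * KK n R (y n))" for n
    unfolding LK_KK fx g_def[symmetric] decomp by (simp add: y_def algebra_simps)
  have L: "(\<lambda>n. ln_mu \<mu> x * (g' x * (real n * KK n (\<lambda>t. t - x) (y n))
     + g'' x / 2 * (real n * KK n (\<lambda>t. (t - x)^2) (y n)) + real n * KK n R (y n))) \<longlonglongrightarrow>
     ln_mu \<mu> x * (g' x * (c + 1/2 - x) + g'' x / 2 * (x * (1 - x)) + 0)"
    by (intro tendsto_intros lim1[OF yl] lim2[OF yl] rem_lim[OF Rc small yr yl x])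
  have E: "ln_mu \<mu> x * (g' x * (c + 1/2 - x) + g'' x / 2 * (x * (1 - x)) + 0) =
    ln_mu \<mu> x * (g' x * (1/2 + (x - x^2) / (2 * (1 + \<mu>)) - x) + g'' x * ((x - x^2) / 2))"
    by (simp add: c_def algebra_simps power2_eq_square)
  show ?thesis unfolding eq using L unfolding E .
qed

end
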